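(* Let $G$ be a finite group acting (on the right, by functors) on a finite category $\mathcal S$, and let $\mathcal S_{hG}$ be the homotopy orbit category (Grothendieck construction), so that $|\mathcal S_{hG}(a,b)|=\sum_{g\in G}|\mathcal S(a,bg^{-1})|$. Let $\mathcal F$ be a finite category with the same objects as $\mathcal S$ and let $d_\bullet,t^\bullet:\mathrm{Ob}(\mathcal S)\to\mathbb Q$ be functions such that $d_a|\mathcal F(a,b)|t^b=|\mathcal S_{hG}(a,b)|$ for all objects $a,b$. (1) If $m^\bullet:\mathrm{Ob}(\mathcal S)\to\mathbb Q$ satisfies $\sum_b|\mathcal S(a,b)|m^b=d_a$ for all $a$, and $d_\bullet$ is $G$-invariant, then $|G|^{-1}t^\bullet m^\bullet$ is a weighting for $\mathcal F$. (2) If $m_\bullet:\mathrm{Ob}(\mathcal S)\to\mathbb Q$ satisfies $\sum_a m_a|\mathcal S(a,b)|=t^b$ for all $b$, and $t^\bullet$ is $G$-invariant, then $|G|^{-1}m_\bullet d_\bullet$ is a coweighting for $\mathcal F$. (3) Suppose $\mathcal S$ has Möbius inversion, i.e. the matrix $(|\mathcal S(a,b)|)_{a,b}$ is invertible with inverse $\mu$. If $d_\bullet$ is $G$-invariant then $k^a=|G|^{-1}\sum_b t^a\mu(a,b)d_b$ is a weighting for $\mathcal F$, and if $t^\bullet$ is $G$-invariant then $k_b=|G|^{-1}\sum_a t^a\mu(a,b)d_b$ is a coweighting for $\mathcal F$.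
   Context: The homotopy orbit category $\mathcal S_{hG}$ has the same objects as $\mathcal S$ and morphisms $a\to b$ the pairs $(g,\varphi)$ with $g\in G$ and $\varphi\in\mathcal S(ag,b)$; since $G$ acts by functors, $|\mathcal S(ag,b)|=|\mathcal S(a,bg^{-1})|$. A function on objects is $G$-invariant if it is constant on $G$-orbits. For a finite category $\mathcal C$, a weighting is $k^\bullet:\mathrm{Ob}(\mathcal C)\to\mathbb Q$ with $\sum_b|\mathcal C(a,b)|k^b=1$ for all objects $a$, and a coweighting is $k_\bullet$ with $\sum_ak_a|\mathcal C(a,b)|=1$ for all objects $b$. *)

theory Defs
  imports Complex_Main "HOL-Algebra.Group"
begin

record ('o, 'm) category =
  Obj :: "'o set"
  Hom :: "'o \<Rightarrow> 'o \<Rightarrow> 'm set"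
  Id  :: "'o \<Rightarrow> 'm"
  Comp :: "'m \<Rightarrow> 'm \<Rightarrow> 'm"   (* Comp g f = g \<circ> f *)

definition category :: "('o, 'm, 'x) category_scheme \<Rightarrow> bool" where
  "category C \<longleftrightarrow>
     (\<forall>a\<in>Obj C. Id C a \<in> Hom C a a) \<and>
     (\<forall>a\<in>Obj C. \<forall>b\<in>Obj C. \<forall>c\<in>Obj C. \<forall>f\<in>Hom C a b. \<forall>g\<in>Hom C b c.
         Comp C g f \<in> Hom C a c) \<and>
     (\<forall>a\<in>Obj C. \<forall>b\<in>Obj C. \<forall>f\<in>Hom C a b.
         Comp C (Id C b) f = f \<and> Comp C f (Id C a) = f) \<and>
     (\<forall>a\<in>Obj C. \<forall>b\<in>Obj C. \<forall>c\<in>Obj C. \<forall>d\<in>Obj C.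
        \<forall>f\<in>Hom C a b. \<forall>g\<in>Hom C b c. \<forall>h\<in>Hom C c d.
         Comp C h (Comp C g f) = Comp C (Comp C h g) f) \<and>
     (\<forall>a\<in>Obj C. \<forall>b\<in>Obj C. \<forall>a'\<in>Obj C. \<forall>b'\<in>Obj C.
         (a, b) \<noteq> (a', b') \<longrightarrow> Hom C a b \<inter> Hom C a' b' = {})"

definition finite_category :: "('o, 'm, 'x) category_scheme \<Rightarrow> bool" where
  "finite_category C \<longleftrightarrow> category C \<and> finite (Obj C) \<and>
     (\<forall>a\<in>Obj C. \<forall>b\<in>Obj C. finite (Hom C a b))"

definition right_action_by_functors ::
  "('g, 'y) monoid_scheme \<Rightarrow> ('o, 'm, 'x) category_scheme \<Rightarrow>
   ('o \<Rightarrow> 'g \<Rightarrow> 'o) \<Rightarrow> ('m \<Rightarrow> 'g \<Rightarrow> 'm) \<Rightarrow> bool" where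
  "right_action_by_functors G C actO actM \<longleftrightarrow>
     (\<forall>g\<in>carrier G. \<forall>a\<in>Obj C. actO a g \<in> Obj C) \<and>
     (\<forall>g\<in>carrier G. \<forall>a\<in>Obj C. \<forall>b\<in>Obj C. \<forall>f\<in>Hom C a b.
         actM f g \<in> Hom C (actO a g) (actO b g)) \<and>
     (\<forall>g\<in>carrier G. \<forall>a\<in>Obj C. actM (Id C a) g = Id C (actO a g)) \<and>
     (\<forall>g\<in>carrier G. \<forall>a\<in>Obj C. \<forall>b\<in>Obj C. \<forall>c\<in>Obj C. \<forall>f\<in>Hom C a b. \<forall>h\<in>Hom C b c.
         actM (Comp C h f) g = Comp C (actM h g) (actM f g)) \<and>
     (\<forall>a\<in>Obj C. actO a \<one>\<^bsub>G\<^esub> = a) \<and>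
     (\<forall>a\<in>Obj C. \<forall>b\<in>Obj C. \<forall>f\<in>Hom C a b. actM f \<one>\<^bsub>G\<^esub> = f) \<and>
     (\<forall>g\<in>carrier G. \<forall>h\<in>carrier G. \<forall>a\<in>Obj C.
         actO a (g \<otimes>\<^bsub>G\<^esub> h) = actO (actO a g) h) \<and>
     (\<forall>g\<in>carrier G. \<forall>h\<in>carrier G. \<forall>a\<in>Obj C. \<forall>b\<in>Obj C. \<forall>f\<in>Hom C a b.
         actM f (g \<otimes>\<^bsub>G\<^esub> h) = actM (actM f g) h)"

definition hG_Hom ::
  "('g, 'y) monoid_scheme \<Rightarrow> ('o, 'm, 'x) category_scheme \<Rightarrow>
   ('o \<Rightarrow> 'g \<Rightarrow> 'o) \<Rightarrow> 'o \<Rightarrow> 'o \<Rightarrow> ('g \<times> 'm) set" where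
  "hG_Hom G C actO a b = Sigma (carrier G) (\<lambda>g. Hom C (actO a g) b)"

definition G_invariant ::
  "('g, 'y) monoid_scheme \<Rightarrow> ('o, 'm, 'x) category_scheme \<Rightarrow>
   ('o \<Rightarrow> 'g \<Rightarrow> 'o) \<Rightarrow> ('o \<Rightarrow> rat) \<Rightarrow> bool" where
  "G_invariant G C actO f \<longleftrightarrow> (\<forall>g\<in>carrier G. \<forall>a\<in>Obj C. f (actO a g) = f a)"

definition weighting :: "('o, 'm, 'x) category_scheme \<Rightarrow> ('o \<Rightarrow> rat) \<Rightarrow> bool" where
  "weighting C k \<longleftrightarrow>
     (\<forall>a\<in>Obj C. (\<Sum>b\<in>Obj C. of_nat (card (Hom C a b)) * k b) = 1)"

definition coweighting :: "('o, 'm, 'x) category_scheme \<Rightarrow> ('o \<Rightarrow> rat) \<Rightarrow> bool" where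
  "coweighting C k \<longleftrightarrow>
     (\<forall>b\<in>Obj C. (\<Sum>a\<in>Obj C. k a * of_nat (card (Hom C a b))) = 1)"

definition moebius_inverse :: "('o, 'm, 'x) category_scheme \<Rightarrow> ('o \<Rightarrow> 'o \<Rightarrow> rat) \<Rightarrow> bool" where
  "moebius_inverse C mu \<longleftrightarrow>
     (\<forall>a\<in>Obj C. \<forall>c\<in>Obj C.
        (\<Sum>b\<in>Obj C. of_nat (card (Hom C a b)) * mu b c) = (if a = c then 1 else 0)) \<and>
     (\<forall>a\<in>Obj C. \<forall>c\<in>Obj C.
        (\<Sum>b\<in>Obj C. mu a b * of_nat (card (Hom C b c))) = (if a = c then 1 else 0))"

end

theory Submission
  imports Defs
begin

lemma card_hG:
  assumes "finite (carrier G)" "finite_category S" "right_action_by_functors G S actO actM"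
    "a \<in> Obj S" "b \<in> Obj S"
  shows "card (hG_Hom G S actO a b) = (\<Sum>g\<in>carrier G. card (Hom S (actO a g) b))"
  unfolding hG_Hom_def
  by (rule card_SigmaI) (use assms in \<open>auto simp: finite_category_def right_action_by_functors_def\<close>)

lemma hG_pos:
  assumes "group G" "finite (carrier G)" "finite_category S" "right_action_by_functors G S actO actM"
    "a \<in> Obj S"
  shows "card (hG_Hom G S actO a a) > 0"
proof -
  have "(\<one>\<^bsub>G\<^esub>, Id S a) \<in> hG_Hom G S actO a a"
    using assms unfolding hG_Hom_def right_action_by_functors_def finite_category_def category_def
    by (auto simp: group.is_monoid monoid.one_closed)
  moreover have "finite (hG_Hom G S actO a a)"
    unfolding hG_Hom_def
    using assms by (auto simp: finite_category_def right_action_by_functors_def intro!: finite_SigmaI)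
  ultimately show ?thesis by (auto simp: card_gt_0_iff)
qed

lemma actO_in: "right_action_by_functors G S actO actM \<Longrightarrow> g \<in> carrier G \<Longrightarrow> a \<in> Obj S \<Longrightarrow> actO a g \<in> Obj S"
  unfolding right_action_by_functors_def by (elim conjE) blast
lemma actM_in: "right_action_by_functors G S actO actM \<Longrightarrow> g \<in> carrier G \<Longrightarrow> a \<in> Obj S \<Longrightarrow> b \<in> Obj S \<Longrightarrow> f \<in> Hom S a b \<Longrightarrow> actM f g \<in> Hom S (actO a g) (actO b g)"
  unfolding right_action_by_functors_def by (elim conjE) blast
lemma actO_one: "right_action_by_functors G S actO actM \<Longrightarrow> a \<in> Obj S \<Longrightarrow> actO a \<one>\<^bsub>G\<^esub> = a"
  unfolding right_action_by_functors_def by (elim conjE) blast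
lemma actM_one: "right_action_by_functors G S actO actM \<Longrightarrow> a \<in> Obj S \<Longrightarrow> b \<in> Obj S \<Longrightarrow> f \<in> Hom S a b \<Longrightarrow> actM f \<one>\<^bsub>G\<^esub> = f"
  unfolding right_action_by_functors_def by (elim conjE) blast
lemma actO_mult: "right_action_by_functors G S actO actM \<Longrightarrow> g \<in> carrier G \<Longrightarrow> h \<in> carrier G \<Longrightarrow> a \<in> Obj S \<Longrightarrow> actO a (g \<otimes>\<^bsub>G\<^esub> h) = actO (actO a g) h"
  unfolding right_action_by_functors_def by simp
lemma actM_mult: "right_action_by_functors G S actO actM \<Longrightarrow> g \<in> carrier G \<Longrightarrow> h \<in> carrier G \<Longrightarrow> a \<in> Obj S \<Longrightarrow> b \<in> Obj S \<Longrightarrow> f \<in> Hom S a b \<Longrightarrow> actM f (g \<otimes>\<^bsub>G\<^esub> h) = actM (actM f g) h"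
  unfolding right_action_by_functors_def by simp

lemma hom_shift:
  assumes grp: "group G" and act: "right_action_by_functors G S actO actM"
    and g: "g \<in> carrier G" and a: "a \<in> Obj S" and b: "b \<in> Obj S"
  shows "card (Hom S (actO a g) b) = card (Hom S a (actO b (inv\<^bsub>G\<^esub> g)))"
proof -
  have ig: "inv\<^bsub>G\<^esub> g \<in> carrier G" using grp g by (simp add: group.inv_closed)
  have ag: "actO a g \<in> Obj S" and bi: "actO b (inv\<^bsub>G\<^esub> g) \<in> Obj S"
    using actO_in[OF act] g ig a b by auto
  have e1: "actO (actO a g) (inv\<^bsub>G\<^esub> g) = a"
    using actO_mult[OF act g ig a] actO_one[OF act a] group.r_inv[OF grp g] by simp
  have e2: "actO (actO b (inv\<^bsub>G\<^esub> g)) g = b"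
    using actO_mult[OF act ig g b] actO_one[OF act b] group.l_inv[OF grp g] by simp
  have "bij_betw (\<lambda>f. actM f (inv\<^bsub>G\<^esub> g)) (Hom S (actO a g) b) (Hom S a (actO b (inv\<^bsub>G\<^esub> g)))"
  proof (rule bij_betw_byWitness[where f' = "\<lambda>f. actM f g"])
    show "\<forall>f\<in>Hom S (actO a g) b. actM (actM f (inv\<^bsub>G\<^esub> g)) g = f"
      using actM_mult[OF act ig g ag b] actM_one[OF act ag b] group.l_inv[OF grp g] by simp
    show "\<forall>f\<in>Hom S a (actO b (inv\<^bsub>G\<^esub> g)). actM (actM f g) (inv\<^bsub>G\<^esub> g) = f"
      using actM_mult[OF act g ig a bi] actM_one[OF act a bi] group.r_inv[OF grp g] by simp
    show "(\<lambda>f. actM f (inv\<^bsub>G\<^esub> g)) ` Hom S (actO a g) b \<subseteq> Hom S a (actO b (inv\<^bsub>G\<^esub> g))"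
      using actM_in[OF act ig ag b] e1 by auto
    show "(\<lambda>f. actM f g) ` Hom S a (actO b (inv\<^bsub>G\<^esub> g)) \<subseteq> Hom S (actO a g) b"
      using actM_in[OF act g a bi] e2 by auto
  qed
  then show ?thesis by (rule bij_betw_same_card)
qed

lemma part1:
  fixes G :: "('g, 'y) monoid_scheme"
    and S :: "('o, 'm, 'x) category_scheme"
    and F :: "('o, 'n, 'z) category_scheme"
    and d t m :: "'o \<Rightarrow> rat"
  assumes grp: "group G" and fin: "finite (carrier G)"
    and fS: "finite_category S"
    and act: "right_action_by_functors G S actO actM"
    and OF: "Obj F = Obj S"
    and H: "\<forall>a\<in>Obj S. \<forall>b\<in>Obj S.
           d a * of_nat (card (Hom F a b)) * t b = of_nat (card (hG_Hom G S actO a b))"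
    and M: "\<forall>a\<in>Obj S. (\<Sum>b\<in>Obj S. of_nat (card (Hom S a b)) * m b) = d a"
    and inv: "G_invariant G S actO d"
  shows "weighting F (\<lambda>a. t a * m a / of_nat (card (carrier G)))"
  unfolding weighting_def OF
proof
  fix a assume a: "a \<in> Obj S"
  define n :: rat where "n = of_nat (card (carrier G))"
  have n0: "n \<noteq> 0" unfolding n_def using fin grp
    by (metis card_0_eq empty_iff group.is_monoid monoid.one_closed of_nat_eq_0_iff)
  have da: "d a \<noteq> 0" using H a hG_pos[OF grp fin fS act a] by force
  have "d a * (\<Sum>b\<in>Obj S. of_nat (card (Hom F a b)) * (t b * m b / n)) * n
        = (\<Sum>b\<in>Obj S. (d a * of_nat (card (Hom F a b)) * t b) * m b)"
  proof -
    have "d a * (\<Sum>b\<in>Obj S. of_nat (card (Hom F a b)) * (t b * m b / n)) * n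
        = (\<Sum>b\<in>Obj S. d a * (of_nat (card (Hom F a b)) * (t b * m b / n)) * n)"
      by (simp only: sum_distrib_left sum_distrib_right)
    also have "\<dots> = (\<Sum>b\<in>Obj S. (d a * of_nat (card (Hom F a b)) * t b) * m b)"
      using n0 by (intro sum.cong refl) (simp add: field_simps)
    finally show ?thesis .
  qed
  also have "\<dots> = (\<Sum>b\<in>Obj S. (\<Sum>g\<in>carrier G. of_nat (card (Hom S (actO a g) b))) * m b)"
    using H a card_hG[OF fin fS act a] by (intro sum.cong) auto
  also have "\<dots> = (\<Sum>g\<in>carrier G. \<Sum>b\<in>Obj S. of_nat (card (Hom S (actO a g) b)) * m b)"
    by (simp only: sum_distrib_right) (rule sum.swap)
  also have "\<dots> = (\<Sum>g\<in>carrier G. d a)"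
  proof (rule sum.cong)
    fix g assume g: "g \<in> carrier G"
    have "actO a g \<in> Obj S" using act g a unfolding right_action_by_functors_def by auto
    then show "(\<Sum>b\<in>Obj S. of_nat (card (Hom S (actO a g) b)) * m b) = d a"
      using M inv g a unfolding G_invariant_def by auto
  qed simp
  also have "\<dots> = d a * n" unfolding n_def by simp
  finally have "d a * ((\<Sum>b\<in>Obj S. of_nat (card (Hom F a b)) * (t b * m b / n)) * n) = d a * n"
    by (simp add: mult.assoc)
  then have "(\<Sum>b\<in>Obj S. of_nat (card (Hom F a b)) * (t b * m b / n)) * n = n"
    using da by simp
  then show "(\<Sum>b\<in>Obj S. of_nat (card (Hom F a b)) * (t b * m b / of_nat (card (carrier G)))) = 1"
    using n0 unfolding n_def by (metis mult_cancel_right2)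
qed

lemma part2:
  fixes G :: "('g, 'y) monoid_scheme"
    and S :: "('o, 'm, 'x) category_scheme"
    and F :: "('o, 'n, 'z) category_scheme"
    and d t m :: "'o \<Rightarrow> rat"
  assumes grp: "group G" and fin: "finite (carrier G)"
    and fS: "finite_category S"
    and act: "right_action_by_functors G S actO actM"
    and OF: "Obj F = Obj S"
    and H: "\<forall>a\<in>Obj S. \<forall>b\<in>Obj S.
           d a * of_nat (card (Hom F a b)) * t b = of_nat (card (hG_Hom G S actO a b))"
    and M: "\<forall>b\<in>Obj S. (\<Sum>a\<in>Obj S. m a * of_nat (card (Hom S a b))) = t b"
    and inv: "G_invariant G S actO t"
  shows "coweighting F (\<lambda>a. m a * d a / of_nat (card (carrier G)))"
  unfolding coweighting_def OF
proof
  fix b assume b: "b \<in> Obj S"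
  define n :: rat where "n = of_nat (card (carrier G))"
  have n0: "n \<noteq> 0" unfolding n_def using fin grp
    by (metis card_0_eq empty_iff group.is_monoid monoid.one_closed of_nat_eq_0_iff)
  have tb: "t b \<noteq> 0" using H b hG_pos[OF grp fin fS act b] by force
  have "t b * (\<Sum>a\<in>Obj S. m a * d a / n * of_nat (card (Hom F a b))) * n
        = (\<Sum>a\<in>Obj S. m a * (d a * of_nat (card (Hom F a b)) * t b))"
  proof -
    have "t b * (\<Sum>a\<in>Obj S. m a * d a / n * of_nat (card (Hom F a b))) * n
        = (\<Sum>a\<in>Obj S. t b * (m a * d a / n * of_nat (card (Hom F a b))) * n)"
      by (simp only: sum_distrib_left sum_distrib_right)
    also have "\<dots> = (\<Sum>a\<in>Obj S. m a * (d a * of_nat (card (Hom F a b)) * t b))"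
      using n0 by (intro sum.cong refl) (simp add: field_simps)
    finally show ?thesis .
  qed
  also have "\<dots> = (\<Sum>a\<in>Obj S. m a * (\<Sum>g\<in>carrier G. of_nat (card (Hom S (actO a g) b))))"
    using H b card_hG[OF fin fS act _ b] by (intro sum.cong) auto
  also have "\<dots> = (\<Sum>a\<in>Obj S. m a * (\<Sum>g\<in>carrier G. of_nat (card (Hom S a (actO b (inv\<^bsub>G\<^esub> g))))))"
    using hom_shift[OF grp act _ _ b] by (intro sum.cong refl arg_cong2[where f="(*)"]) auto
  also have "\<dots> = (\<Sum>g\<in>carrier G. \<Sum>a\<in>Obj S. m a * of_nat (card (Hom S a (actO b (inv\<^bsub>G\<^esub> g)))))"
    by (simp only: sum_distrib_left) (rule sum.swap)
  also have "\<dots> = (\<Sum>g\<in>carrier G. t b)"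
  proof (rule sum.cong)
    fix g assume g: "g \<in> carrier G"
    have ig: "inv\<^bsub>G\<^esub> g \<in> carrier G" using grp g by (simp add: group.inv_closed)
    have "actO b (inv\<^bsub>G\<^esub> g) \<in> Obj S" using act ig b unfolding right_action_by_functors_def by auto
    then show "(\<Sum>a\<in>Obj S. m a * of_nat (card (Hom S a (actO b (inv\<^bsub>G\<^esub> g))))) = t b"
      using M inv ig b unfolding G_invariant_def by auto
  qed simp
  also have "\<dots> = t b * n" unfolding n_def by simp
  finally have "t b * ((\<Sum>a\<in>Obj S. m a * d a / n * of_nat (card (Hom F a b))) * n) = t b * n"
    by (simp add: mult.assoc)
  then have "(\<Sum>a\<in>Obj S. m a * d a / n * of_nat (card (Hom F a b))) * n = n"
    using tb by simp
  then show "(\<Sum>a\<in>Obj S. m a * d a / of_nat (card (carrier G)) * of_nat (card (Hom F a b))) = 1"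
    using n0 unfolding n_def by (metis mult_cancel_right2)
qed

theorem theorem2p8:
  fixes G :: "('g, 'y) monoid_scheme"
    and S :: "('o, 'm, 'x) category_scheme"
    and F :: "('o, 'n, 'z) category_scheme"
    and actO :: "'o \<Rightarrow> 'g \<Rightarrow> 'o" and actM :: "'m \<Rightarrow> 'g \<Rightarrow> 'm"
    and d t :: "'o \<Rightarrow> rat"
  assumes "group G" and "finite (carrier G)"
    and "finite_category S"
    and "right_action_by_functors G S actO actM"
    and "finite_category F" and "Obj F = Obj S"
    and "\<forall>a\<in>Obj S. \<forall>b\<in>Obj S.
           d a * of_nat (card (Hom F a b)) * t b = of_nat (card (hG_Hom G S actO a b))"
  shows
   "(\<forall>m :: 'o \<Rightarrow> rat.
       (\<forall>a\<in>Obj S. (\<Sum>b\<in>Obj S. of_nat (card (Hom S a b)) * m b) = d a)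
       \<and> G_invariant G S actO d
       \<longrightarrow> weighting F (\<lambda>a. t a * m a / of_nat (card (carrier G))))
    \<and> (\<forall>m :: 'o \<Rightarrow> rat.
       (\<forall>b\<in>Obj S. (\<Sum>a\<in>Obj S. m a * of_nat (card (Hom S a b))) = t b)
       \<and> G_invariant G S actO t
       \<longrightarrow> coweighting F (\<lambda>a. m a * d a / of_nat (card (carrier G))))
    \<and> (\<forall>mu :: 'o \<Rightarrow> 'o \<Rightarrow> rat. moebius_inverse S mu \<longrightarrow>
        (G_invariant G S actO d \<longrightarrow>
           weighting F (\<lambda>a. (\<Sum>b\<in>Obj S. t a * mu a b * d b) / of_nat (card (carrier G))))
      \<and> (G_invariant G S actO t \<longrightarrow>
           coweighting F (\<lambda>b. (\<Sum>a\<in>Obj S. t a * mu a b * d b) / of_nat (card (carrier G)))))"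
proof (intro conjI allI impI)
  note P1 = part1[OF assms(1-4) assms(6,7)]
  note P2 = part2[OF assms(1-4) assms(6,7)]
  show "weighting F (\<lambda>a. t a * m a / of_nat (card (carrier G)))"
    if "(\<forall>a\<in>Obj S. (\<Sum>b\<in>Obj S. of_nat (card (Hom S a b)) * m b) = d a) \<and> G_invariant G S actO d"
    for m using that P1 by blast
  show "coweighting F (\<lambda>a. m a * d a / of_nat (card (carrier G)))"
    if "(\<forall>b\<in>Obj S. (\<Sum>a\<in>Obj S. m a * of_nat (card (Hom S a b))) = t b) \<and> G_invariant G S actO t"
    for m using that P2 by blast
  have finO: "finite (Obj S)" using assms(3) by (simp add: finite_category_def)
  fix mu assume mu: "moebius_inverse S mu"
  {
    assume inv: "G_invariant G S actO d"
    define m where "m b = (\<Sum>c\<in>Obj S. mu b c * d c)" for b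
    have M: "\<forall>a\<in>Obj S. (\<Sum>b\<in>Obj S. of_nat (card (Hom S a b)) * m b) = d a"
    proof
      fix a assume a: "a \<in> Obj S"
      have "(\<Sum>b\<in>Obj S. of_nat (card (Hom S a b)) * m b)
          = (\<Sum>c\<in>Obj S. (\<Sum>b\<in>Obj S. of_nat (card (Hom S a b)) * mu b c) * d c)"
        unfolding m_def by (simp only: sum_distrib_left sum_distrib_right mult.assoc) (rule sum.swap)
      also have "\<dots> = (\<Sum>c\<in>Obj S. (if a = c then d c else 0))"
        using mu a unfolding moebius_inverse_def by (intro sum.cong) auto
      also have "\<dots> = d a" using a finO by simp
      finally show "(\<Sum>b\<in>Obj S. of_nat (card (Hom S a b)) * m b) = d a" .
    qed
    have "weighting F (\<lambda>a. t a * m a / of_nat (card (carrier G)))" using P1 M inv by blast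
    moreover have "(\<lambda>a. t a * m a / of_nat (card (carrier G)))
      = (\<lambda>a. (\<Sum>b\<in>Obj S. t a * mu a b * d b) / of_nat (card (carrier G)))"
      unfolding m_def by (simp add: sum_distrib_left mult.assoc)
    ultimately show "weighting F (\<lambda>a. (\<Sum>b\<in>Obj S. t a * mu a b * d b) / of_nat (card (carrier G)))"
      by simp
  }
  {
    assume inv: "G_invariant G S actO t"
    define m where "m b = (\<Sum>a\<in>Obj S. t a * mu a b)" for b
    have M: "\<forall>b\<in>Obj S. (\<Sum>a\<in>Obj S. m a * of_nat (card (Hom S a b))) = t b"
    proof
      fix b assume b: "b \<in> Obj S"
      have "(\<Sum>a\<in>Obj S. m a * of_nat (card (Hom S a b)))
          = (\<Sum>c\<in>Obj S. t c * (\<Sum>a\<in>Obj S. mu c a * of_nat (card (Hom S a b))))"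
        unfolding m_def by (simp only: sum_distrib_left sum_distrib_right mult.assoc) (rule sum.swap)
      also have "\<dots> = (\<Sum>c\<in>Obj S. (if c = b then t c else 0))"
        using mu b unfolding moebius_inverse_def by (intro sum.cong) auto
      also have "\<dots> = t b" using b finO by simp
      finally show "(\<Sum>a\<in>Obj S. m a * of_nat (card (Hom S a b))) = t b" .
    qed
    have "coweighting F (\<lambda>a. m a * d a / of_nat (card (carrier G)))" using P2 M inv by blast
    moreover have "(\<lambda>a. m a * d a / of_nat (card (carrier G)))
      = (\<lambda>b. (\<Sum>a\<in>Obj S. t a * mu a b * d b) / of_nat (card (carrier G)))"
      unfolding m_def by (simp add: sum_distrib_right)
    ultimately show "coweighting F (\<lambda>b. (\<Sum>a\<in>Obj S. t a * mu a b * d b) / of_nat (card (carrier G)))"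
      by simp
  }
qed

end
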